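(* Let $\mathbb{T}$ be a split torus over $k$ with character lattice $M$, and let $K_{\mathbb{T}}=\mathrm{Frac}(k[M])$. A rational $\mathbb{G}_a$-action $\alpha:\mathbb{G}_a\times\mathbb{T}\dashrightarrow\mathbb{T}$ is $\mathbb{T}$-homogeneous if and only if its associated $k$-derivation $\partial:k[M]\to K_{\mathbb{T}}$ is homogeneous. Moreover, every homogeneous $k$-derivation $\partial:k[M]\to K_{\mathbb{T}}$ takes values in $k[M]$.
   Context: $k$ is a field of characteristic zero, $\mathbb{T}=\mathbb{G}_{m,k}^n$, $M=\mathrm{Hom}(\mathbb{T},\mathbb{G}_{m,k})$, $k[M]=\bigoplus_{m\in M}k\chi^m$ the $M$-graded coordinate ring of $\mathbb{T}$. An element of $K_{\mathbb{T}}$ is homogeneous if it is a quotient of homogeneous elements of $k[M]$; a derivation $\partial$ (defined on $k[M]$ or $K_{\mathbb{T}}$, with values in $K_{\mathbb{T}}$) is homogeneous if it sends homogeneous elements to homogeneous elements. The derivation associated to a rational $\mathbb{G}_a$-action $\alpha$ is $f\mapsto\frac{d}{dt}\alpha^*(f)|_{t=0}$. A rational $\mathbb{G}_a$-action on a variety with $\mathbb{T}$-action is $\mathbb{T}$-homogeneous if it semi-commutes with $\mathbb{T}$: there is a character $\chi$ of $\mathbb{T}$ with $\lambda\cdot(t\cdot x)=(\chi(\lambda)t)\cdot(\lambda\cdot x)$ for all $\lambda\in\mathbb{T}$, i.e. the subgroup of birational transformations generated by $\mathbb{T}$ and $\mathbb{G}_a$ is a semidirect product $\mathbb{T}\ltimes\mathbb{G}_a$.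 *)

theory Defs
  imports "HOL-Library.Poly_Mapping" "HOL-Computational_Algebra.Polynomial"
          "HOL-Computational_Algebra.Fraction_Field"
begin

(* The split torus T = G_m^n is encoded through a finite index type 'n
  (n = CARD('n)); its character lattice is M = ('n =>0 int) = Z^n
  (the linorder on 'n is only needed so that Isabelle knows k[M] is a domain).
  k[M] is the group algebra M =>0 'k (element  Poly_Mapping.single m c  = c chi^m),
  K_T = Frac(k[M]),  K_T(t) = Frac(K_T[t]) = k(G_a x T),
  K_T(t)(s) = Frac(K_T(t)[s]) = k(G_a x G_a x T). *)

type_synonym ('n, 'k) laurent = "('n \<Rightarrow>\<^sub>0 int) \<Rightarrow>\<^sub>0 'k"
type_synonym ('n, 'k) KT = "('n, 'k) laurent fract"
type_synonym ('n, 'k) KTt = "('n, 'k) KT poly fract"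
type_synonym ('n, 'k) KTst = "('n, 'k) KTt poly fract"

definition to_fr :: "'a::idom \<Rightarrow> 'a fract" where
  "to_fr x = Fract x 1"

definition fract_lift :: "('a::idom \<Rightarrow> 'b::field) \<Rightarrow> 'a fract \<Rightarrow> 'b" where
  "fract_lift h \<phi> = (THE c. \<exists>p q. q \<noteq> 0 \<and> \<phi> = Fract p q \<and> c = h p / h q)"

definition regular0 :: "'a::field poly fract \<Rightarrow> bool" where
  "regular0 \<phi> \<longleftrightarrow> (\<exists>p q. poly q 0 \<noteq> 0 \<and> \<phi> = Fract p q)"

definition eval0 :: "'a::field poly fract \<Rightarrow> 'a" where
  "eval0 \<phi> = (THE c. \<exists>p q. poly q 0 \<noteq> 0 \<and> \<phi> = Fract p q \<and> c = poly p 0 / poly q 0)"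

definition ddt0 :: "'a::field poly fract \<Rightarrow> 'a" where
  "ddt0 \<phi> = (THE c. \<exists>p q. poly q 0 \<noteq> 0 \<and> \<phi> = Fract p q \<and>
     c = (poly (pderiv p) 0 * poly q 0 - poly p 0 * poly (pderiv q) 0) / (poly q 0)^2)"

definition homog_R :: "('n, 'k::zero) laurent \<Rightarrow> bool" where
  "homog_R f \<longleftrightarrow> (\<exists>m c. f = Poly_Mapping.single m c)"

definition homog_K ::
  "('n::{finite,linorder}, 'k::field_char_0) KT \<Rightarrow> bool" where
  "homog_K \<phi> \<longleftrightarrow> (\<exists>a b. homog_R a \<and> homog_R b \<and> b \<noteq> 0 \<and> \<phi> = Fract a b)"

definition k_derivation ::
  "(('n::{finite,linorder}, 'k::field_char_0) laurent \<Rightarrow> ('n, 'k) KT) \<Rightarrow> bool" where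
  "k_derivation D \<longleftrightarrow>
     (\<forall>f g. D (f + g) = D f + D g) \<and>
     (\<forall>f g. D (f * g) = to_fr f * D g + to_fr g * D f) \<and>
     (\<forall>c f. D (Poly_Mapping.single 0 c * f) = to_fr (Poly_Mapping.single 0 c) * D f)"

definition homogeneous_der ::
  "(('n::{finite,linorder}, 'k::field_char_0) laurent \<Rightarrow> ('n, 'k) KT) \<Rightarrow> bool" where
  "homogeneous_der D \<longleftrightarrow> (\<forall>f. homog_R f \<longrightarrow> homog_K (D f))"

(* Rational G_a-actions on T, given by their comorphism
  A = alpha^* : k[M] \<rightarrow> k(G_a x T) = K_T(t). *)

definition constK :: "('n::{finite,linorder}, 'k::field_char_0) KT \<Rightarrow> ('n, 'k) KTt" where
  "constK c = to_fr [:c:]"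

definition A_ext :: "(('n::{finite,linorder}, 'k::field_char_0) laurent \<Rightarrow> ('n, 'k) KTt)
    \<Rightarrow> ('n, 'k) KT \<Rightarrow> ('n, 'k) KTt" where
  "A_ext A = fract_lift A"

(* comorphism of (s,t,x) \<mapsto> alpha(s, alpha(t,x)), applied to phi(s,x) in K_T(s) *)
definition comp_pullback :: "(('n::{finite,linorder}, 'k::field_char_0) laurent \<Rightarrow> ('n, 'k) KTt)
    \<Rightarrow> ('n, 'k) KTt \<Rightarrow> ('n, 'k) KTst" where
  "comp_pullback A = fract_lift (\<lambda>p. to_fr (map_poly (A_ext A) p))"

(* substitution t \<mapsto> s + t : K_T(t) \<rightarrow> K_T(t)(s) *)
definition shift_st :: "('n::{finite,linorder}, 'k::field_char_0) KTt \<Rightarrow> ('n, 'k) KTst" where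
  "shift_st = fract_lift (\<lambda>p. to_fr (poly (map_poly (\<lambda>c. [: constK c :]) p)
                                          [: to_fr [:0, 1:], 1 :]))"

definition rational_Ga_action ::
  "(('n::{finite,linorder}, 'k::field_char_0) laurent \<Rightarrow> ('n, 'k) KTt) \<Rightarrow> bool" where
  "rational_Ga_action A \<longleftrightarrow>
     A 1 = 1 \<and> (\<forall>f g. A (f + g) = A f + A g) \<and> (\<forall>f g. A (f * g) = A f * A g) \<and>
     (\<forall>c. A (Poly_Mapping.single 0 c) = constK (to_fr (Poly_Mapping.single 0 c))) \<and>
     inj A \<and>
     (\<forall>f. regular0 (A f) \<and> eval0 (A f) = to_fr f) \<and>
     (\<forall>f. comp_pullback A (A f) = shift_st (A f))"

definition associated_derivation ::
  "(('n::{finite,linorder}, 'k::field_char_0) laurent \<Rightarrow> ('n, 'k) KTt)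
    \<Rightarrow> ('n, 'k) laurent \<Rightarrow> ('n, 'k) KT" where
  "associated_derivation A f = ddt0 (A f)"

(* Torus action: lambda \<in> T(k) = ('n \<Rightarrow> k^x), chi^m(lambda) = prod_i lambda_i^(m_i). *)
definition charval :: "('n::finite \<Rightarrow> 'k::field) \<Rightarrow> ('n \<Rightarrow>\<^sub>0 int) \<Rightarrow> 'k" where
  "charval l m = (\<Prod>i\<in>UNIV. l i powi Poly_Mapping.lookup m i)"

(* comorphism of x \<mapsto> lambda . x on k[M] and on K_T *)
definition torus_R :: "('n::{finite,linorder} \<Rightarrow> 'k::field_char_0) \<Rightarrow> ('n, 'k) laurent \<Rightarrow> ('n, 'k) laurent" where
  "torus_R l f = Poly_Mapping.mapp (\<lambda>m c. charval l m * c) f"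

definition torus_K :: "('n::{finite,linorder} \<Rightarrow> 'k::field_char_0) \<Rightarrow> ('n, 'k) KT \<Rightarrow> ('n, 'k) KT" where
  "torus_K l = fract_lift (\<lambda>f. to_fr (torus_R l f))"

(* comorphism of (t, x) \<mapsto> (c t, lambda . x) on K_T(t) *)
definition twist :: "('n::{finite,linorder} \<Rightarrow> 'k::field_char_0) \<Rightarrow> 'k \<Rightarrow> ('n, 'k) KTt \<Rightarrow> ('n, 'k) KTt" where
  "twist l c = fract_lift (\<lambda>p. to_fr (pcompose (map_poly (torus_K l) p)
                                  [: 0, to_fr (Poly_Mapping.single 0 c) :]))"

(* T-homogeneous: there is a character chi = chi^{m0} with
  lambda . (t . x) = (chi(lambda) t) . (lambda . x) for all lambda \<in> T(k). *)
definition T_homogeneous ::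
  "(('n::{finite,linorder}, 'k::field_char_0) laurent \<Rightarrow> ('n, 'k) KTt) \<Rightarrow> bool" where
  "T_homogeneous A \<longleftrightarrow> (\<exists>m0. \<forall>l. (\<forall>i. l i \<noteq> 0) \<longrightarrow>
      (\<forall>f. A (torus_R l f) = twist l (charval l m0) (A f)))"

end

theory Submission
  imports Defs "HOL-Computational_Algebra.Polynomial_FPS"
begin

unbundle fps_syntax

definition ihom :: "('a::idom \<Rightarrow> 'b::idom) \<Rightarrow> bool" where
 "ihom h \<longleftrightarrow> (\<forall>x y. h (x+y) = h x + h y) \<and> (\<forall>x y. h (x*y) = h x * h y) \<and> h 1 = 1
    \<and> (\<forall>x. x \<noteq> 0 \<longrightarrow> h x \<noteq> 0)"

lemma ihom_add: "ihom h \<Longrightarrow> h (x+y) = h x + h y" by (simp add: ihom_def)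
lemma ihom_mult: "ihom h \<Longrightarrow> h (x*y) = h x * h y" by (simp add: ihom_def)
lemma ihom_1: "ihom h \<Longrightarrow> h 1 = 1" by (simp add: ihom_def)
lemma ihom_nz: "ihom h \<Longrightarrow> x \<noteq> 0 \<Longrightarrow> h x \<noteq> 0" by (simp add: ihom_def)
lemma ihom_0: "ihom h \<Longrightarrow> h 0 = 0"
  using ihom_add[of h 0 0] by (metis add_cancel_right_right add_0)
lemma ihom_uminus: "ihom h \<Longrightarrow> h (-x) = - h x"
  using ihom_add[of h x "-x"] ihom_0[of h] by (simp add: eq_neg_iff_add_eq_0 add.commute)
lemma ihom_diff: "ihom h \<Longrightarrow> h (x - y) = h x - h y"
  using ihom_add[of h x "-y"] ihom_uminus[of h y] by simp
lemma ihom_eq_iff: "ihom h \<Longrightarrow> h x = h y \<longleftrightarrow> x = y"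
  using ihom_diff[of h x y] ihom_nz[of h "x-y"] by auto
lemma ihom_eq0_iff: "ihom h \<Longrightarrow> h x = 0 \<longleftrightarrow> x = 0"
  using ihom_nz[of h x] ihom_0[of h] by auto
lemma ihom_sum: "ihom h \<Longrightarrow> h (sum f A) = sum (\<lambda>a. h (f a)) A"
  by (induction A rule: infinite_finite_induct) (auto simp: ihom_0 ihom_add)
lemma ihom_power: "ihom h \<Longrightarrow> h (x ^ n) = h x ^ n"
  by (induction n) (auto simp: ihom_1 ihom_mult)
lemma ihom_of_nat: "ihom h \<Longrightarrow> h (of_nat n) = of_nat n"
  by (induction n) (auto simp: ihom_0 ihom_1 ihom_add)
lemma ihom_divide: "ihom (h :: 'a::field \<Rightarrow> 'b::field) \<Longrightarrow> h (x / y) = h x / h y"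
proof (cases "y = 0")
  case True assume "ihom h" then show ?thesis using True by (simp add: ihom_0)
next
  case False assume h: "ihom h"
  have "h (x / y) * h y = h x" using h False by (metis ihom_mult nonzero_divide_eq_eq)
  then show ?thesis using h False by (simp add: ihom_nz eq_divide_eq)
qed
lemma ihom_comp: "ihom g \<Longrightarrow> ihom h \<Longrightarrow> ihom (g \<circ> h)"
  by (simp add: ihom_def)

lemma ihom_to_fr: "ihom (to_fr :: 'a::idom \<Rightarrow> _)"
  unfolding ihom_def to_fr_def
  by (auto simp: eq_fract One_fract_def) (metis eq_fract(1) one_neq_zero Zero_fract_def mult_1_right)

lemma to_fr_Fract: "(b::'a::idom) \<noteq> 0 \<Longrightarrow> to_fr a / to_fr b = Fract a b"
  by (simp add: to_fr_def)

lemma fract_lift_Fract: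
  fixes h :: "'a::idom \<Rightarrow> 'b::field"
  assumes h: "ihom h" and q: "q \<noteq> 0"
  shows "fract_lift h (Fract p q) = h p / h q"
  unfolding fract_lift_def
proof (rule the_equality)
  show "\<exists>p' q'. q' \<noteq> 0 \<and> Fract p q = Fract p' q' \<and> h p / h q = h p' / h q'"
    using q by blast
next
  fix c assume "\<exists>p' q'. q' \<noteq> 0 \<and> Fract p q = Fract p' q' \<and> c = h p' / h q'"
  then obtain p' q' where q': "q' \<noteq> 0" and e: "Fract p q = Fract p' q'" and c: "c = h p' / h q'"
    by blast
  from e q q' have "p * q' = p' * q" by (simp add: eq_fract)
  then have "h p * h q' = h p' * h q" using h by (metis ihom_mult)
  moreover have "h q \<noteq> 0" "h q' \<noteq> 0" using h q q' by (auto simp: ihom_nz)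
  ultimately have "c * h q * h q' = h p * h q'" using c by (simp add: field_simps)
  then show "c = h p / h q" using \<open>h q \<noteq> 0\<close> \<open>h q' \<noteq> 0\<close> by (simp add: eq_divide_eq)
qed

lemma fract_lift_to_fr:
  fixes h :: "'a::idom \<Rightarrow> 'b::field"
  assumes h: "ihom h" shows "fract_lift h (to_fr x) = h x"
  using fract_lift_Fract[OF h, of 1 x] h by (simp add: to_fr_def ihom_1)

lemma ihom_fract_lift:
  fixes h :: "'a::idom \<Rightarrow> 'b::field"
  assumes h: "ihom h" shows "ihom (fract_lift h)"
  unfolding ihom_def
proof (intro conjI allI impI)
  fix x y :: "'a fract"
  show "fract_lift h (x + y) = fract_lift h x + fract_lift h y"
    by (cases x, cases y) (simp add: fract_lift_Fract[OF h] h ihom_add ihom_mult ihom_nz add_divide_eq_iff divide_add_eq_iff field_simps)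
  show "fract_lift h (x * y) = fract_lift h x * fract_lift h y"
    by (cases x, cases y) (simp add: fract_lift_Fract[OF h] h ihom_mult)
  show "fract_lift h 1 = 1" using fract_lift_to_fr[OF h, of 1] h
    by (simp add: ihom_1 to_fr_def One_fract_def)
  assume "x \<noteq> 0" then show "fract_lift h x \<noteq> 0"
    by (cases x) (auto simp: fract_lift_Fract[OF h] h ihom_nz Zero_fract_def eq_fract)
qed


lemma ihom_map_poly:
  fixes h :: "'a::idom \<Rightarrow> 'b::idom"
  assumes h: "ihom h" shows "ihom (map_poly h)"
  unfolding ihom_def
proof (intro conjI allI impI)
  have h0: "h 0 = 0" using h by (rule ihom_0)
  fix x y :: "'a poly"
  show "map_poly h (x + y) = map_poly h x + map_poly h y"
    by (rule poly_eqI) (simp add: coeff_map_poly h0 ihom_add[OF h])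
  show "map_poly h (x * y) = map_poly h x * map_poly h y"
    by (rule poly_eqI) (simp add: coeff_map_poly h0 coeff_mult ihom_sum[OF h] ihom_mult[OF h])
  show "map_poly h 1 = 1" by (simp add: ihom_1[OF h])
  assume "x \<noteq> 0"
  then obtain n where "coeff x n \<noteq> 0" using leading_coeff_neq_0 by blast
  then have "coeff (map_poly h x) n \<noteq> 0" by (simp add: coeff_map_poly h0 ihom_nz[OF h])
  then show "map_poly h x \<noteq> 0" by auto
qed

lemma ihom_pcompose:
  fixes Q :: "'a::idom poly"
  assumes "degree Q > 0" shows "ihom (\<lambda>p. pcompose p Q)"
proof -
  have "pcompose 1 Q = 1" by (simp add: one_pCons pcompose_pCons)
  then show ?thesis unfolding ihom_def using assms
    by (auto simp: pcompose_add pcompose_mult pcompose_eq_0_iff)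
qed

lemma aux_inv1: "a * x + b * inverse a = 0 \<Longrightarrow> (a::'a::field) \<noteq> 0 \<Longrightarrow> x = - b / a^2"
  proof -
  assume h: "a * x + b * inverse a = 0" and a: "a \<noteq> 0"
  then have "a * x = - (b * inverse a)" by (simp add: eq_neg_iff_add_eq_0)
  moreover have "x = (a * x) / a" using a by simp
  ultimately have "x = - (b * inverse a) / a" by simp
  then show "x = - b / a^2" using a by (simp add: power2_eq_square divide_inverse)
qed

definition Fps :: "'a::field poly fract \<Rightarrow> 'a fps" where
  "Fps \<phi> = (THE G. \<exists>p q. poly q 0 \<noteq> 0 \<and> \<phi> = Fract p q \<and> G = fps_of_poly p * inverse (fps_of_poly q))"

lemma Fps_Fract:
  fixes p q :: "'a::field poly"
  assumes q: "poly q 0 \<noteq> 0"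
  shows "Fps (Fract p q) = fps_of_poly p * inverse (fps_of_poly q)"
  unfolding Fps_def
proof (rule the_equality)
  show "\<exists>p' q'. poly q' 0 \<noteq> 0 \<and> Fract p q = Fract p' q' \<and>
      fps_of_poly p * inverse (fps_of_poly q) = fps_of_poly p' * inverse (fps_of_poly q')"
    using q by blast
next
  fix G assume "\<exists>p' q'. poly q' 0 \<noteq> 0 \<and> Fract p q = Fract p' q' \<and>
      G = fps_of_poly p' * inverse (fps_of_poly q')"
  then obtain p' q' where q': "poly q' 0 \<noteq> 0" and e: "Fract p q = Fract p' q'"
    and G: "G = fps_of_poly p' * inverse (fps_of_poly q')" by blast
  have qn: "q \<noteq> 0" "q' \<noteq> 0" using q q' by auto
  from e qn have pq: "p * q' = p' * q" by (simp add: eq_fract)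
  have u: "fps_of_poly q $ 0 \<noteq> 0" "fps_of_poly q' $ 0 \<noteq> 0"
    using q q' by (simp_all add: poly_0_coeff_0)
  have "fps_of_poly p * fps_of_poly q' = fps_of_poly p' * fps_of_poly q"
    using pq by (metis fps_of_poly_mult)
  note i1 = inverse_mult_eq_1[OF u(1)] and i2 = inverse_mult_eq_1[OF u(2)]
  have "fps_of_poly p * inverse (fps_of_poly q) =
     fps_of_poly p * inverse (fps_of_poly q) * (inverse (fps_of_poly q') * fps_of_poly q')"
    using i2 by simp
  also have "\<dots> = (fps_of_poly p * fps_of_poly q') * (inverse (fps_of_poly q) * inverse (fps_of_poly q'))"
    by (simp only: mult_ac)
  also have "\<dots> = (fps_of_poly p' * fps_of_poly q) * (inverse (fps_of_poly q) * inverse (fps_of_poly q'))"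
    by (simp only: \<open>fps_of_poly p * fps_of_poly q' = fps_of_poly p' * fps_of_poly q\<close>)
  also have "\<dots> = fps_of_poly p' * inverse (fps_of_poly q') * (inverse (fps_of_poly q) * fps_of_poly q)"
    by (simp only: mult_ac)
  also have "\<dots> = G" using i1 G by simp
  finally show "G = fps_of_poly p * inverse (fps_of_poly q)" by simp
qed

lemma Fps_nth0:
  fixes p q :: "'a::field poly"
  assumes q: "poly q 0 \<noteq> 0"
  shows "Fps (Fract p q) $ 0 = poly p 0 / poly q 0"
  using q by (simp add: Fps_Fract poly_0_coeff_0 field_simps)

lemma Fps_nth1:
  fixes p q :: "'a::field poly"
  assumes q: "poly q 0 \<noteq> 0"
  shows "Fps (Fract p q) $ 1 = (poly (pderiv p) 0 * poly q 0 - poly p 0 * poly (pderiv q) 0) / (poly q 0)^2"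
proof -
  let ?Q = "fps_of_poly q"
  have u: "?Q $ 0 \<noteq> 0" using q by (simp add: poly_0_coeff_0)
  have "(?Q * inverse ?Q) $ 1 = 0" using inverse_mult_eq_1'[OF u] by simp
  then have "?Q $ 0 * inverse ?Q $ 1 + ?Q $ 1 * inverse (?Q $ 0) = 0"
    by (simp only: fps_mult_nth_1 fps_inverse_nth_0)
  then have i1: "inverse ?Q $ 1 = - (?Q $ 1) / (?Q $ 0)^2"
    using aux_inv1 u by blast
  show ?thesis using q
    by (simp add: Fps_Fract fps_mult_nth_1 i1[simplified] poly_0_coeff_0 coeff_pderiv power2_eq_square field_simps)
qed

lemma eval0_Fps:
  assumes "regular0 \<phi>" shows "eval0 \<phi> = Fps \<phi> $ 0"
proof -
  obtain p q where q: "poly q 0 \<noteq> 0" and e: "\<phi> = Fract p q" using assms regular0_def by blast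
  show ?thesis unfolding eval0_def
  proof (rule the_equality)
    show "\<exists>p q. poly q 0 \<noteq> 0 \<and> \<phi> = Fract p q \<and> Fps \<phi> $ 0 = poly p 0 / poly q 0"
      using q e Fps_nth0 by blast
  qed (auto simp: Fps_nth0)
qed

lemma ddt0_Fps:
  assumes "regular0 \<phi>" shows "ddt0 \<phi> = Fps \<phi> $ 1"
proof -
  obtain p q where q: "poly q 0 \<noteq> 0" and e: "\<phi> = Fract p q" using assms regular0_def by blast
  show ?thesis unfolding ddt0_def
  proof (rule the_equality)
    show "\<exists>p q. poly q 0 \<noteq> 0 \<and> \<phi> = Fract p q \<and> Fps \<phi> $ 1 =
       (poly (pderiv p) 0 * poly q 0 - poly p 0 * poly (pderiv q) 0) / (poly q 0)^2"
      using q e Fps_nth1 by blast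
  qed (metis Fps_nth1)
qed


lemma regular0_E: "regular0 \<phi> \<Longrightarrow> (\<And>p q. poly q 0 \<noteq> 0 \<Longrightarrow> \<phi> = Fract p q \<Longrightarrow> P) \<Longrightarrow> P"
  unfolding regular0_def by blast

lemma regular0_Fract: "poly q 0 \<noteq> 0 \<Longrightarrow> regular0 (Fract p q)"
  unfolding regular0_def by blast

lemma regular0_add: assumes "regular0 \<phi>" "regular0 \<psi>" shows "regular0 (\<phi> + \<psi>)"
proof -
  obtain p q where q: "poly q 0 \<noteq> 0" and e: "\<phi> = Fract p q" using assms(1) by (rule regular0_E)
  obtain p' q' where q': "poly q' 0 \<noteq> 0" and e': "\<psi> = Fract p' q'" using assms(2) by (rule regular0_E)
  have "q \<noteq> 0" "q' \<noteq> 0" using q q' by auto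
  then have "\<phi> + \<psi> = Fract (p * q' + p' * q) (q * q')" using e e' by simp
  then show ?thesis using q q' by (simp add: regular0_Fract)
qed

lemma regular0_mult: assumes "regular0 \<phi>" "regular0 \<psi>" shows "regular0 (\<phi> * \<psi>)"
proof -
  obtain p q where q: "poly q 0 \<noteq> 0" and e: "\<phi> = Fract p q" using assms(1) by (rule regular0_E)
  obtain p' q' where q': "poly q' 0 \<noteq> 0" and e': "\<psi> = Fract p' q'" using assms(2) by (rule regular0_E)
  have "\<phi> * \<psi> = Fract (p * p') (q * q')" using e e' by simp
  then show ?thesis using q q' by (simp add: regular0_Fract)
qed

lemma regular0_uminus: assumes "regular0 \<phi>" shows "regular0 (- \<phi>)"
proof -
  obtain p q where q: "poly q 0 \<noteq> 0" and e: "\<phi> = Fract p q" using assms(1) by (rule regular0_E)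
  have "- \<phi> = Fract (- p) q" using e by simp
  then show ?thesis using q by (simp add: regular0_Fract)
qed

lemma regular0_diff: "regular0 \<phi> \<Longrightarrow> regular0 \<psi> \<Longrightarrow> regular0 (\<phi> - \<psi>)"
  using regular0_add[of \<phi> "- \<psi>"] regular0_uminus[of \<psi>] by simp

lemma Fps_add:
  assumes "regular0 \<phi>" "regular0 \<psi>" shows "Fps (\<phi> + \<psi>) = Fps \<phi> + Fps \<psi>"
proof -
  obtain p q where q: "poly q 0 \<noteq> 0" and e: "\<phi> = Fract p q" using assms(1) by (rule regular0_E)
  obtain p' q' where q': "poly q' 0 \<noteq> 0" and e': "\<psi> = Fract p' q'" using assms(2) by (rule regular0_E)
  have qn: "q \<noteq> 0" "q' \<noteq> 0" using q q' by auto
  have u: "fps_of_poly q $ 0 \<noteq> 0" "fps_of_poly q' $ 0 \<noteq> 0"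
    using q q' by (simp_all add: poly_0_coeff_0)
  note i1 = inverse_mult_eq_1[OF u(1)] and i2 = inverse_mult_eq_1[OF u(2)]
  have s: "\<phi> + \<psi> = Fract (p * q' + p' * q) (q * q')" using e e' qn by simp
  have pq: "poly (q * q') 0 \<noteq> 0" using q q' by simp
  let ?P = "fps_of_poly p" and ?Q = "fps_of_poly q" and ?P' = "fps_of_poly p'" and ?Q' = "fps_of_poly q'"
  have "Fps (\<phi> + \<psi>) = (?P * ?Q' + ?P' * ?Q) * (inverse ?Q * inverse ?Q')"
    unfolding s Fps_Fract[OF pq] by (simp add: fps_of_poly_add fps_of_poly_mult fps_inverse_mult)
  also have "\<dots> = ?P * inverse ?Q * (inverse ?Q' * ?Q') + ?P' * inverse ?Q' * (inverse ?Q * ?Q)"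
    by (simp add: algebra_simps)
  also have "\<dots> = Fps \<phi> + Fps \<psi>" using i1 i2 e e' q q' by (simp add: Fps_Fract)
  finally show ?thesis .
qed

lemma Fps_mult:
  assumes "regular0 \<phi>" "regular0 \<psi>" shows "Fps (\<phi> * \<psi>) = Fps \<phi> * Fps \<psi>"
proof -
  obtain p q where q: "poly q 0 \<noteq> 0" and e: "\<phi> = Fract p q" using assms(1) by (rule regular0_E)
  obtain p' q' where q': "poly q' 0 \<noteq> 0" and e': "\<psi> = Fract p' q'" using assms(2) by (rule regular0_E)
  have s: "\<phi> * \<psi> = Fract (p * p') (q * q')" using e e' by simp
  have pq: "poly (q * q') 0 \<noteq> 0" using q q' by simp
  have "Fps (\<phi> * \<psi>) = fps_of_poly (p * p') * inverse (fps_of_poly (q * q'))"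
    unfolding s by (rule Fps_Fract[OF pq])
  then show ?thesis unfolding e e' Fps_Fract[OF q] Fps_Fract[OF q']
    by (simp add: fps_of_poly_mult fps_inverse_mult algebra_simps)
qed

lemma Fps_diff:
  assumes "regular0 \<phi>" "regular0 \<psi>" shows "Fps (\<phi> - \<psi>) = Fps \<phi> - Fps \<psi>"
proof -
  have "Fps (\<phi> - \<psi>) + Fps \<psi> = Fps \<phi>"
    using Fps_add[OF regular0_diff[OF assms] assms(2)] by simp
  then show ?thesis by (simp add: eq_diff_eq)
qed

lemma Fps_eq0:
  assumes "regular0 \<phi>" "Fps \<phi> = 0" shows "\<phi> = 0"
proof -
  obtain p q where q: "poly q 0 \<noteq> 0" and e: "\<phi> = Fract p q" using assms(1) by (rule regular0_E)
  have u: "fps_of_poly q $ 0 \<noteq> 0" using q by (simp add: poly_0_coeff_0)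
  have "fps_of_poly p * inverse (fps_of_poly q) * fps_of_poly q = 0"
    using assms e q by (simp add: Fps_Fract)
  then have "fps_of_poly p = 0" using inverse_mult_eq_1[OF u] by (simp add: mult.assoc)
  then have "p = 0" by (metis fps_of_poly_0 fps_of_poly_eq_iff)
  then show ?thesis using e by (simp add: fract_collapse)
qed

lemma Fps_inj:
  assumes "regular0 \<phi>" "regular0 \<psi>" "Fps \<phi> = Fps \<psi>" shows "\<phi> = \<psi>"
  using Fps_eq0[OF regular0_diff[OF assms(1,2)]] Fps_diff[OF assms(1,2)] assms(3) by simp

lemma regular0_to_fr: "regular0 (to_fr p)"
  unfolding to_fr_def by (rule regular0_Fract) simp

lemma Fps_to_fr: "Fps (to_fr p) = fps_of_poly p"
  unfolding to_fr_def by (simp add: Fps_Fract)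


definition Tw :: "('a::field \<Rightarrow> 'a) \<Rightarrow> 'a \<Rightarrow> 'a poly fract \<Rightarrow> 'a poly fract" where
  "Tw h C = fract_lift (\<lambda>p. to_fr (pcompose (map_poly h p) [:0, C:]))"

definition Psi :: "('a::field \<Rightarrow> 'a) \<Rightarrow> 'a \<Rightarrow> 'a fps \<Rightarrow> 'a fps" where
  "Psi h C G = Abs_fps (\<lambda>k. C ^ k * h (G $ k))"

lemma Psi_nth [simp]: "Psi h C G $ k = C ^ k * h (G $ k)"
  by (simp add: Psi_def)

lemma ihom_Tw_inner:
  assumes h: "ihom h" and C: "C \<noteq> 0"
  shows "ihom (\<lambda>p. to_fr (pcompose (map_poly h p) [:0, C:]))"
proof -
  have "ihom ((to_fr \<circ> (\<lambda>p. pcompose p [:0, C:])) \<circ> map_poly h)"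
    by (intro ihom_comp ihom_to_fr ihom_pcompose ihom_map_poly h) (simp add: C)
  then show ?thesis by (simp add: comp_def)
qed

lemma coeff_Tw_poly:
  assumes h: "ihom h"
  shows "coeff (pcompose (map_poly h p) [:0, C:]) k = C ^ k * h (coeff p k)"
  by (simp add: coeff_pcompose_linear coeff_map_poly ihom_0[OF h])

lemma Psi_mult:
  assumes h: "ihom h" shows "Psi h C (F * G) = Psi h C F * Psi h C G"
proof (rule fps_ext)
  fix n
  have "Psi h C (F * G) $ n = (\<Sum>i=0..n. C ^ n * (h (F $ i) * h (G $ (n - i))))"
    by (simp add: fps_mult_nth ihom_sum[OF h] ihom_mult[OF h] sum_distrib_left)
  also have "\<dots> = (\<Sum>i=0..n. (C ^ i * h (F $ i)) * (C ^ (n - i) * h (G $ (n - i))))"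
  proof (rule sum.cong)
    fix i assume "i \<in> {0..n}"
    then have "C ^ n = C ^ i * C ^ (n - i)" by (simp add: power_add[symmetric])
    then show "C ^ n * (h (F $ i) * h (G $ (n - i))) = (C ^ i * h (F $ i)) * (C ^ (n - i) * h (G $ (n - i)))"
      by (simp add: mult_ac)
  qed simp
  also have "\<dots> = (Psi h C F * Psi h C G) $ n" by (simp add: fps_mult_nth)
  finally show "Psi h C (F * G) $ n = (Psi h C F * Psi h C G) $ n" .
qed

lemma Psi_1: assumes h: "ihom h" shows "Psi h C 1 = 1"
  by (rule fps_ext) (simp add: ihom_1[OF h] ihom_0[OF h])

lemma Psi_inverse:
  assumes h: "ihom h" and u: "G $ 0 \<noteq> 0"
  shows "Psi h C (inverse G) = inverse (Psi h C G)"
proof -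
  have "Psi h C G * Psi h C (inverse G) = 1"
    using Psi_mult[OF h, of C G "inverse G", symmetric] inverse_mult_eq_1'[OF u] Psi_1[OF h] by simp
  then show ?thesis by (rule fps_inverse_unique[symmetric])
qed

lemma fps_Tw_poly:
  assumes h: "ihom h"
  shows "fps_of_poly (pcompose (map_poly h p) [:0, C:]) = Psi h C (fps_of_poly p)"
  by (rule fps_ext) (simp add: coeff_Tw_poly[OF h])

lemma Tw_Fract:
  assumes h: "ihom h" and C: "C \<noteq> 0" and q: "q \<noteq> 0"
  shows "Tw h C (Fract p q) = Fract (pcompose (map_poly h p) [:0, C:]) (pcompose (map_poly h q) [:0, C:])"
proof -
  have "pcompose (map_poly h q) [:0, C:] \<noteq> 0"
    using ihom_nz[OF ihom_Tw_inner[OF h C] q] ihom_0[OF ihom_to_fr] by metis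
  then show ?thesis unfolding Tw_def using fract_lift_Fract[OF ihom_Tw_inner[OF h C] q] by (simp add: to_fr_Fract)
qed

lemma Tw_regular_Fps:
  assumes h: "ihom h" and C: "C \<noteq> 0" and r: "regular0 \<phi>"
  shows "regular0 (Tw h C \<phi>) \<and> Fps (Tw h C \<phi>) = Psi h C (Fps \<phi>)"
proof -
  obtain p q where q: "poly q 0 \<noteq> 0" and e: "\<phi> = Fract p q" using r by (rule regular0_E)
  have q0: "q \<noteq> 0" using q by auto
  have q': "poly (pcompose (map_poly h q) [:0, C:]) 0 \<noteq> 0"
    using q by (simp add: poly_0_coeff_0 coeff_Tw_poly[OF h] ihom_nz[OF h] coeff_map_poly ihom_0[OF h])
  have u: "fps_of_poly q $ 0 \<noteq> 0" using q by (simp add: poly_0_coeff_0)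
  show ?thesis
    unfolding e Tw_Fract[OF h C q0]
    using q q' by (simp add: regular0_Fract Fps_Fract fps_Tw_poly[OF h] Psi_mult[OF h] Psi_inverse[OF h u])
qed


lemma ihom_poly:
  assumes h: "ihom h" shows "h (poly p x) = poly (map_poly h p) (h x)"
  by (induction p) (simp_all add: map_poly_pCons ihom_0[OF h] ihom_add[OF h] ihom_mult[OF h])

lemma pderiv_map_poly:
  assumes h: "ihom h" shows "pderiv (map_poly h p) = map_poly h (pderiv p)"
  by (rule poly_eqI) (simp add: coeff_pderiv coeff_map_poly ihom_0[OF h] ihom_mult[OF h] ihom_of_nat[OF h] ihom_add[OF h] ihom_1[OF h])

lemma eval0_Fract: "poly q 0 \<noteq> 0 \<Longrightarrow> eval0 (Fract p q) = poly p 0 / poly q 0"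
  using eval0_Fps[OF regular0_Fract] Fps_nth0 by metis

lemma ddt0_Fract: "poly q 0 \<noteq> 0 \<Longrightarrow>
   ddt0 (Fract p q) = (poly (pderiv p) 0 * poly q 0 - poly p 0 * poly (pderiv q) 0) / (poly q 0)^2"
  using ddt0_Fps[OF regular0_Fract] Fps_nth1 by metis

definition CP :: "('a::field \<Rightarrow> 'b::field) \<Rightarrow> 'a poly fract \<Rightarrow> 'b poly fract" where
  "CP E = fract_lift (\<lambda>p. to_fr (map_poly E p))"

lemma CP_Fract:
  assumes E: "ihom E" and q: "q \<noteq> 0"
  shows "CP E (Fract p q) = Fract (map_poly E p) (map_poly E q)"
proof -
  have i: "ihom (\<lambda>p. to_fr (map_poly E p))"
    using ihom_comp[OF ihom_to_fr ihom_map_poly[OF E]] by (simp add: comp_def)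
  have "map_poly E q \<noteq> 0" using ihom_nz[OF ihom_map_poly[OF E] q] .
  then show ?thesis unfolding CP_def using fract_lift_Fract[OF i q] by (simp add: to_fr_Fract)
qed

lemma CP_ddt0:
  assumes E: "ihom E" and r: "regular0 \<phi>"
  shows "ddt0 (CP E \<phi>) = E (ddt0 \<phi>)"
proof -
  obtain p q where q: "poly q 0 \<noteq> 0" and e: "\<phi> = Fract p q" using r by (rule regular0_E)
  have q0: "q \<noteq> 0" using q by auto
  have pe: "\<And>r. poly (map_poly E r) 0 = E (poly r 0)"
    using ihom_poly[OF E] ihom_0[OF E] by metis
  have q': "poly (map_poly E q) 0 \<noteq> 0" using q by (simp add: pe ihom_nz[OF E])
  show ?thesis unfolding e CP_Fract[OF E q0] ddt0_Fract[OF q] ddt0_Fract[OF q']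
    by (simp add: pderiv_map_poly[OF E] pe ihom_divide[OF E] ihom_diff[OF E] ihom_mult[OF E] ihom_power[OF E])
qed

definition SH :: "('a::field \<Rightarrow> 'b::field) \<Rightarrow> 'b \<Rightarrow> 'a poly \<Rightarrow> 'b poly" where
  "SH e T p = pcompose (map_poly e p) [:T, 1:]"

lemma ihom_SH: assumes e: "ihom e" shows "ihom (SH e T)"
proof -
  have "ihom ((\<lambda>p. pcompose p [:T, 1:]) \<circ> map_poly e)"
    by (intro ihom_comp ihom_pcompose ihom_map_poly e) simp
  moreover have "SH e T = (\<lambda>p. pcompose (map_poly e p) [:T, 1:])" by (rule ext) (simp add: SH_def)
  ultimately show ?thesis by (simp add: comp_def)
qed

lemma SH_poly0: assumes e: "ihom e" shows "poly (SH e T p) 0 = poly (map_poly e p) T"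
  by (simp add: SH_def poly_pcompose)

lemma SH_pderiv: assumes e: "ihom e" shows "pderiv (SH e T p) = SH e T (pderiv p)"
  by (simp add: SH_def pderiv_pcompose pderiv_map_poly[OF e] pderiv_pCons)

lemma SH_ddt0:
  assumes e: "ihom e" and q: "poly (map_poly e q) T \<noteq> 0"
  shows "ddt0 (Fract (SH e T p) (SH e T q)) =
    (poly (map_poly e (pderiv p)) T * poly (map_poly e q) T - poly (map_poly e p) T * poly (map_poly e (pderiv q)) T)
      / (poly (map_poly e q) T)^2"
  using q by (simp add: ddt0_Fract SH_poly0[OF e] SH_pderiv[OF e])


lemma charval_add: "(\<forall>i. l i \<noteq> 0) \<Longrightarrow> charval l (a + b) = charval l a * charval l b"
  by (simp add: charval_def lookup_add power_int_add prod.distrib)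

lemma charval_0 [simp]: "charval l 0 = 1"
  by (simp add: charval_def)

lemma charval_nz: "(\<forall>i. l i \<noteq> 0) \<Longrightarrow> charval l a \<noteq> 0"
  by (simp add: charval_def)

lemma charval_uminus: "(\<forall>i. l i \<noteq> 0) \<Longrightarrow> charval l (- a) = inverse (charval l a)"
  using charval_add[of l a "-a"] charval_nz[of l a]
  by (simp add: field_simps)

lemma charval_diff: "(\<forall>i. l i \<noteq> 0) \<Longrightarrow> charval l (a - b) = charval l a / charval l b"
  using charval_add[of l a "-b"] charval_uminus[of l b] by (simp add: divide_inverse)

lemma lookup_torus_R: "Poly_Mapping.lookup (torus_R l f) a = charval l a * Poly_Mapping.lookup f a"
  by (simp add: torus_R_def lookup_mapp when_def in_keys_iff)

lemma torus_R_single: "torus_R l (Poly_Mapping.single a c) = Poly_Mapping.single a (charval l a * c)"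
  by (rule poly_mapping_eqI) (simp add: lookup_torus_R lookup_single when_def)

lemma pm_sum_single: "(f::'a \<Rightarrow>\<^sub>0 'b::comm_monoid_add) = (\<Sum>a\<in>Poly_Mapping.keys f. Poly_Mapping.single a (Poly_Mapping.lookup f a))"
proof (rule poly_mapping_eqI)
  fix k
  have "(\<Sum>a\<in>Poly_Mapping.keys f. Poly_Mapping.lookup (Poly_Mapping.single a (Poly_Mapping.lookup f a)) k) = (\<Sum>a\<in>Poly_Mapping.keys f. if a = k then Poly_Mapping.lookup f a else 0)"
    by (rule sum.cong) (auto simp: lookup_single when_def)
  also have "\<dots> = Poly_Mapping.lookup f k"
    by (simp add: sum.delta in_keys_iff)
  finally show "Poly_Mapping.lookup f k = Poly_Mapping.lookup (\<Sum>a\<in>Poly_Mapping.keys f. Poly_Mapping.single a (Poly_Mapping.lookup f a)) k"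
    by (simp add: lookup_sum)
qed

lemma torus_R_add: "torus_R l (f + g) = torus_R l f + torus_R l g"
  by (rule poly_mapping_eqI) (simp add: lookup_torus_R lookup_add algebra_simps)

lemma torus_R_0 [simp]: "torus_R l 0 = 0"
  by (rule poly_mapping_eqI) (simp add: lookup_torus_R)

lemma torus_R_sum: "torus_R l (sum F A) = (\<Sum>a\<in>A. torus_R l (F a))"
  by (induction A rule: infinite_finite_induct) (simp_all add: torus_R_add)

lemma pm_mult_expand:
  "f * g = (\<Sum>a\<in>Poly_Mapping.keys f. \<Sum>b\<in>Poly_Mapping.keys g. Poly_Mapping.single (a + b) (Poly_Mapping.lookup f a * Poly_Mapping.lookup g b))"
proof -
  have "f * g = (\<Sum>a\<in>Poly_Mapping.keys f. Poly_Mapping.single a (Poly_Mapping.lookup f a)) * (\<Sum>b\<in>Poly_Mapping.keys g. Poly_Mapping.single b (Poly_Mapping.lookup g b))"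
    using pm_sum_single[of f] pm_sum_single[of g] by simp
  also have "\<dots> = (\<Sum>a\<in>Poly_Mapping.keys f. \<Sum>b\<in>Poly_Mapping.keys g. Poly_Mapping.single (a + b) (Poly_Mapping.lookup f a * Poly_Mapping.lookup g b))"
    by (simp add: sum_product mult_single)
  finally show ?thesis .
qed

lemma ihom_torus_R:
  fixes l :: "'n::{finite,linorder} \<Rightarrow> 'k::field_char_0"
  assumes l: "\<forall>i. l i \<noteq> 0"
  shows "ihom (torus_R l :: ('n, 'k) laurent \<Rightarrow> _)"
  unfolding ihom_def
proof (intro conjI allI impI)
  fix f g :: "('n, 'k) laurent"
  show "torus_R l (f + g) = torus_R l f + torus_R l g" by (rule torus_R_add)
  have "torus_R l (f * g) = (\<Sum>a\<in>Poly_Mapping.keys f. \<Sum>b\<in>Poly_Mapping.keys g.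
      Poly_Mapping.single (a + b) (charval l a * Poly_Mapping.lookup f a * (charval l b * Poly_Mapping.lookup g b)))"
    by (simp add: pm_mult_expand[of f g] torus_R_sum torus_R_single charval_add[OF l] mult_ac)
  also have "\<dots> = (\<Sum>a\<in>Poly_Mapping.keys f. Poly_Mapping.single a (charval l a * Poly_Mapping.lookup f a)) *
       (\<Sum>b\<in>Poly_Mapping.keys g. Poly_Mapping.single b (charval l b * Poly_Mapping.lookup g b))"
    by (simp add: sum_product mult_single)
  also have "\<dots> = torus_R l f * torus_R l g"
    by (subst (3) pm_sum_single, subst (3) pm_sum_single) (simp add: torus_R_sum torus_R_single)
  finally show "torus_R l (f * g) = torus_R l f * torus_R l g" .
  show "torus_R l 1 = 1"
    by (simp add: torus_R_single flip: single_one)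
  assume "f \<noteq> 0"
  then obtain a where "Poly_Mapping.lookup f a \<noteq> 0" by (metis poly_mapping_eqI lookup_zero)
  then have "Poly_Mapping.lookup (torus_R l f) a \<noteq> 0" by (simp add: lookup_torus_R charval_nz[OF l])
  then show "torus_R l f \<noteq> 0" by auto
qed

lemma ihom_torus_K:
  assumes l: "\<forall>i. l i \<noteq> 0"
  shows "ihom (torus_K l)"
proof -
  have "ihom (\<lambda>f. to_fr (torus_R l f))"
    using ihom_comp[OF ihom_to_fr ihom_torus_R[OF l]] by (simp add: comp_def)
  then show ?thesis unfolding torus_K_def by (rule ihom_fract_lift)
qed

lemma torus_K_to_fr:
  assumes l: "\<forall>i. l i \<noteq> 0"
  shows "torus_K l (to_fr f) = to_fr (torus_R l f)"
proof -
  have "ihom (\<lambda>f. to_fr (torus_R l f))"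
    using ihom_comp[OF ihom_to_fr ihom_torus_R[OF l]] by (simp add: comp_def)
  then show ?thesis unfolding torus_K_def by (simp add: fract_lift_to_fr)
qed

lemma twist_Tw: "twist l c = Tw (torus_K l) (to_fr (Poly_Mapping.single 0 c))"
  by (simp add: twist_def Tw_def)

lemma to_fr_single0_nz: "c \<noteq> 0 \<Longrightarrow> to_fr (Poly_Mapping.single 0 c :: ('n::{finite,linorder}, 'k::field_char_0) laurent) \<noteq> 0"
  using ihom_nz[OF ihom_to_fr] by (metis single_zero inj_single injD)

lemma ihom_constK: "ihom constK"
proof -
  have "ihom (\<lambda>c::'z::idom. [:c:])" unfolding ihom_def by (auto simp: one_pCons)
  then have "ihom (to_fr \<circ> (\<lambda>c::('n::{finite,linorder}, 'k::field_char_0) KT. [:c:]))"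
    by (intro ihom_comp ihom_to_fr)
  then show ?thesis by (simp add: comp_def constK_def[abs_def])
qed


lemma rga_ihom:
  assumes "rational_Ga_action A" shows "ihom A"
proof -
  have add: "\<And>f g. A (f + g) = A f + A g" and inj: "inj A" and one: "A 1 = 1"
    and mult: "\<And>f g. A (f * g) = A f * A g"
    using assms by (auto simp: rational_Ga_action_def)
  have z: "A 0 = 0" using add[of 0 0] by (metis add_cancel_right_right add_0)
  show ?thesis unfolding ihom_def using add mult one inj z by (metis injD)
qed

lemma rga_regular: "rational_Ga_action A \<Longrightarrow> regular0 (A f)"
  and rga_eval0: "rational_Ga_action A \<Longrightarrow> eval0 (A f) = to_fr f"
  by (auto simp: rational_Ga_action_def)

lemma rga_Fps0: "rational_Ga_action A \<Longrightarrow> Fps (A f) $ 0 = to_fr f"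
  using rga_eval0 eval0_Fps rga_regular by metis

lemma rga_der_Fps: "rational_Ga_action A \<Longrightarrow> associated_derivation A f = Fps (A f) $ 1"
  using ddt0_Fps rga_regular associated_derivation_def by metis

lemma constK_poly_T: "poly (map_poly constK p) (to_fr [:0, 1:]) = to_fr p"
proof -
  have "map_poly constK p = map_poly to_fr (map_poly (\<lambda>c. [:c:]) p)"
    by (simp add: map_poly_map_poly comp_def constK_def[abs_def] to_fr_def fract_collapse)
  then show ?thesis
    using ihom_poly[OF ihom_to_fr, of "map_poly (\<lambda>c. [:c:]) p" "[:0, 1:]"]
    by (simp flip: pcompose_altdef)
qed

lemma shift_st_SH: "(shift_st :: ('n::{finite,linorder},'k::field_char_0) KTt \<Rightarrow> _) = fract_lift (\<lambda>p. to_fr (SH constK (to_fr [:0, 1:]) p))"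
proof -
  have "\<And>p :: ('n::{finite,linorder},'k::field_char_0) KT poly. poly (map_poly (\<lambda>c. [:constK c:]) p) [:to_fr [:0, 1:], 1:] = SH constK (to_fr [:0, 1:]) p"
    unfolding SH_def pcompose_altdef
    by (subst map_poly_map_poly) (simp_all add: comp_def constK_def to_fr_def fract_collapse)
  then show ?thesis unfolding shift_st_def by simp
qed

lemma shift_st_ddt0:
  fixes p q :: "('n::{finite,linorder},'k::field_char_0) KT poly"
  assumes q: "q \<noteq> 0"
  shows "ddt0 (shift_st (Fract p q)) = Fract (pderiv p * q - p * pderiv q) (q^2)"
proof -
  let ?T = "to_fr [:0, 1:] :: ('n::{finite,linorder},'k::field_char_0) KTt"
  let ?S = "SH constK ?T"
  have i: "ihom (\<lambda>p. to_fr (?S p))"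
    using ihom_comp[OF ihom_to_fr ihom_SH[OF ihom_constK]] by (simp add: comp_def)
  have Sq: "?S q \<noteq> 0" using ihom_nz[OF ihom_SH[OF ihom_constK] q] .
  have e: "shift_st (Fract p q) = Fract (?S p) (?S q)"
    unfolding shift_st_SH using fract_lift_Fract[OF i q] Sq by (simp add: to_fr_Fract)
  have tq: "to_fr q \<noteq> 0" using ihom_nz[OF ihom_to_fr q] .
  have "ddt0 (shift_st (Fract p q)) =
      (to_fr (pderiv p) * to_fr q - to_fr p * to_fr (pderiv q)) / (to_fr q)^2"
    unfolding e using SH_ddt0[OF ihom_constK, of q ?T p] tq by (simp add: constK_poly_T)
  also have "\<dots> = to_fr (pderiv p * q - p * pderiv q) / to_fr (q^2)"
    by (simp add: ihom_diff[OF ihom_to_fr] ihom_mult[OF ihom_to_fr] ihom_power[OF ihom_to_fr])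
  also have "\<dots> = Fract (pderiv p * q - p * pderiv q) (q^2)"
    using q by (simp add: to_fr_Fract)
  finally show ?thesis .
qed

lemma rga_ODE:
  assumes A: "rational_Ga_action A" and q: "poly q 0 \<noteq> 0" and e: "A f = Fract p q"
  shows "A_ext A (associated_derivation A f) = Fract (pderiv p * q - p * pderiv q) (q^2)"
proof -
  have iA: "ihom (A_ext A)" unfolding A_ext_def by (rule ihom_fract_lift[OF rga_ihom[OF A]])
  have cp: "comp_pullback A = CP (A_ext A)" by (simp add: comp_pullback_def CP_def)
  have "comp_pullback A (A f) = shift_st (A f)" using A by (simp add: rational_Ga_action_def)
  then have "ddt0 (comp_pullback A (A f)) = ddt0 (shift_st (A f))" by simp
  moreover have "ddt0 (comp_pullback A (A f)) = A_ext A (associated_derivation A f)"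
    unfolding cp associated_derivation_def by (rule CP_ddt0[OF iA rga_regular[OF A]])
  moreover have "q \<noteq> 0" using q by auto
  ultimately show ?thesis using e shift_st_ddt0 by metis
qed


lemma rga_kder:
  assumes A: "rational_Ga_action A" shows "k_derivation (associated_derivation A)"
proof -
  have iA: "ihom A" by (rule rga_ihom[OF A])
  note r = rga_regular[OF A]
  have D: "\<And>f. associated_derivation A f = Fps (A f) $ 1" by (rule rga_der_Fps[OF A])
  have add: "\<And>f g. associated_derivation A (f + g) = associated_derivation A f + associated_derivation A g"
    by (simp add: D ihom_add[OF iA] Fps_add[OF r r])
  have mult: "\<And>f g. associated_derivation A (f * g) = to_fr f * associated_derivation A g + to_fr g * associated_derivation A f"
    by (simp add: D ihom_mult[OF iA] Fps_mult[OF r r] fps_mult_nth_1 rga_Fps0[OF A] mult_ac)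
  have c0: "\<And>c. associated_derivation A (Poly_Mapping.single 0 c) = 0"
  proof -
    fix c
    have "A (Poly_Mapping.single 0 c) = to_fr [: to_fr (Poly_Mapping.single 0 c) :]"
      using A by (simp add: rational_Ga_action_def constK_def)
    then show "associated_derivation A (Poly_Mapping.single 0 c) = 0"
      by (simp add: D Fps_to_fr)
  qed
  show ?thesis unfolding k_derivation_def using add mult c0 by simp
qed

lemma homog_K_to_fr:
  fixes \<phi> :: "('n::{finite,linorder},'k::field_char_0) KT"
  assumes "homog_K \<phi>" shows "\<exists>m c. \<phi> = to_fr (Poly_Mapping.single m c)"
proof -
  obtain m c m' c' where e: "\<phi> = Fract (Poly_Mapping.single m c) (Poly_Mapping.single m' c')"
    and nz: "Poly_Mapping.single m' c' \<noteq> (0::('n,'k) laurent)"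
    using assms unfolding homog_K_def homog_R_def by blast
  have c': "c' \<noteq> 0" using nz by auto
  have "Fract (Poly_Mapping.single m c) (Poly_Mapping.single m' c') = to_fr (Poly_Mapping.single (m - m') (c / c'))"
    unfolding to_fr_def using nz c' by (simp add: eq_fract mult_single)
  then show ?thesis using e by blast
qed

lemma kder_0: "k_derivation D \<Longrightarrow> D 0 = 0"
  unfolding k_derivation_def by (metis add_cancel_right_right add_0)

lemma kder_sum: "k_derivation D \<Longrightarrow> D (sum F S) = (\<Sum>a\<in>S. D (F a))"
  by (induction S rule: infinite_finite_induct) (auto simp: kder_0 k_derivation_def)

theorem part2:
  fixes D :: "('n::{finite,linorder}, 'k::field_char_0) laurent \<Rightarrow> ('n, 'k) KT"
  assumes kd: "k_derivation D" and hd: "homogeneous_der D"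
  shows "\<exists>g. D f = to_fr g"
proof -
  have "\<forall>a\<in>Poly_Mapping.keys f. \<exists>g. D (Poly_Mapping.single a (Poly_Mapping.lookup f a)) = to_fr g"
    using hd homog_K_to_fr unfolding homogeneous_der_def homog_R_def by blast
  then obtain G where G: "\<forall>a\<in>Poly_Mapping.keys f. D (Poly_Mapping.single a (Poly_Mapping.lookup f a)) = to_fr (G a)"
    by metis
  have "D f = D (\<Sum>a\<in>Poly_Mapping.keys f. Poly_Mapping.single a (Poly_Mapping.lookup f a))"
    by (subst pm_sum_single[of f]) simp
  also have "\<dots> = (\<Sum>a\<in>Poly_Mapping.keys f. to_fr (G a))" using G by (simp add: kder_sum[OF kd])
  also have "\<dots> = to_fr (\<Sum>a\<in>Poly_Mapping.keys f. G a)" by (simp add: ihom_sum[OF ihom_to_fr])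
  finally show ?thesis by blast
qed


definition dprime :: "(('n::{finite,linorder}, 'k::field_char_0) laurent \<Rightarrow> ('n, 'k) KT) \<Rightarrow> ('n, 'k) laurent \<Rightarrow> ('n, 'k) laurent" where
  "dprime D f = (SOME g. D f = to_fr g)"

locale hder =
  fixes D :: "('n::{finite,linorder}, 'k::field_char_0) laurent \<Rightarrow> ('n, 'k) KT"
  assumes kd: "k_derivation D" and hd: "homogeneous_der D"
begin

abbreviation "D' \<equiv> dprime D"

lemma D_eq: "D f = to_fr (D' f)"
  unfolding dprime_def using part2[OF kd hd, of f] by (rule someI_ex)

lemma to_fr_inj: "to_fr x = to_fr y \<Longrightarrow> x = y"
  using ihom_eq_iff[OF ihom_to_fr] by blast

lemma D'_add: "D' (f + g) = D' f + D' g"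
  apply (rule to_fr_inj) using kd unfolding k_derivation_def by (simp add: D_eq[symmetric] ihom_add[OF ihom_to_fr])

lemma D'_0: "D' 0 = 0"
  using D'_add[of 0 0] by (metis add_cancel_right_right add_0)

lemma D'_sum: "D' (sum F S) = (\<Sum>a\<in>S. D' (F a))"
  by (induction S rule: infinite_finite_induct) (auto simp: D'_0 D'_add)

lemma D'_mult: "D' (f * g) = f * D' g + g * D' f"
  apply (rule to_fr_inj) using kd unfolding k_derivation_def by (simp add: D_eq[symmetric] ihom_add[OF ihom_to_fr] ihom_mult[OF ihom_to_fr])

lemma D'_const: "D' (Poly_Mapping.single 0 c * f) = Poly_Mapping.single 0 c * D' f"
proof -
  have "D (Poly_Mapping.single 0 c * f) = to_fr (Poly_Mapping.single 0 c) * D f"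
    using kd unfolding k_derivation_def by blast
  then have "to_fr (D' (Poly_Mapping.single 0 c * f)) = to_fr (Poly_Mapping.single 0 c * D' f)"
    by (simp only: D_eq[symmetric] ihom_mult[OF ihom_to_fr])
  then show ?thesis by (rule to_fr_inj)
qed

lemma D'_homog: "\<exists>b d. D' (Poly_Mapping.single a c) = Poly_Mapping.single b d"
proof -
  have "homog_K (D (Poly_Mapping.single a c))" using hd unfolding homogeneous_der_def homog_R_def by blast
  then obtain b d where "D (Poly_Mapping.single a c) = to_fr (Poly_Mapping.single b d)"
    using homog_K_to_fr by blast
  then show ?thesis using D_eq to_fr_inj by metis
qed

lemma single_eq_lookup:
  assumes "Poly_Mapping.single b e = (g :: ('n, 'k) laurent)" "Poly_Mapping.lookup g x \<noteq> 0"
  shows "x = b"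
  using assms by (auto simp: lookup_single when_def split: if_splits)

lemma shift_unique:
  assumes e1: "D' (Poly_Mapping.single a 1) = Poly_Mapping.single (a + s) d" and d: "d \<noteq> 0"
    and e2: "D' (Poly_Mapping.single a' 1) = Poly_Mapping.single (a' + s') d'" and d': "d' \<noteq> 0"
  shows "s = s'"
proof (rule ccontr)
  assume ne: "s \<noteq> s'"
  have "D' (Poly_Mapping.single (a + a') 1) = D' (Poly_Mapping.single a 1 * Poly_Mapping.single a' 1)"
    by (simp add: mult_single)
  also have "\<dots> = Poly_Mapping.single a 1 * Poly_Mapping.single (a' + s') d' + Poly_Mapping.single a' 1 * Poly_Mapping.single (a + s) d"
    by (simp add: D'_mult e1 e2)
  also have "\<dots> = Poly_Mapping.single (a + a' + s') d' + Poly_Mapping.single (a + a' + s) d"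
    by (simp add: mult_single add.assoc add.left_commute)
  finally have E: "D' (Poly_Mapping.single (a + a') 1) = Poly_Mapping.single (a + a' + s') d' + Poly_Mapping.single (a + a' + s) d" .
  obtain b c where B: "D' (Poly_Mapping.single (a + a') 1) = Poly_Mapping.single b c" using D'_homog by blast
  have n1: "a + a' + s \<noteq> a + a' + s'" using ne by simp
  have "Poly_Mapping.lookup (D' (Poly_Mapping.single (a + a') 1)) (a + a' + s') = d'"
    using n1 by (simp add: E lookup_add lookup_single when_def)
  then have "a + a' + s' = b" using single_eq_lookup[OF B[symmetric]] d' by simp
  moreover have "Poly_Mapping.lookup (D' (Poly_Mapping.single (a + a') 1)) (a + a' + s) = d"
    using n1 by (simp add: E lookup_add lookup_single when_def)
  then have "a + a' + s = b" using single_eq_lookup[OF B[symmetric]] d by simp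
  ultimately show False using n1 by simp
qed

lemma degree_exists: "\<exists>m0 \<delta>. \<forall>a c. D' (Poly_Mapping.single a c) = Poly_Mapping.single (a + m0) (c * \<delta> a)"
proof -
  have one: "\<exists>m0. \<forall>a. \<exists>d. D' (Poly_Mapping.single a 1) = Poly_Mapping.single (a + m0) d"
  proof (cases "\<exists>a. D' (Poly_Mapping.single a 1) \<noteq> 0")
    case True
    then obtain a0 where a0: "D' (Poly_Mapping.single a0 1) \<noteq> 0" by blast
    obtain b0 d0 where e0: "D' (Poly_Mapping.single a0 1) = Poly_Mapping.single b0 d0" using D'_homog by blast
    have d0: "d0 \<noteq> 0" using a0 e0 by auto
    have e0': "D' (Poly_Mapping.single a0 1) = Poly_Mapping.single (a0 + (b0 - a0)) d0" using e0 by simp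
    show ?thesis
    proof (rule exI[of _ "b0 - a0"], rule allI)
      fix a
      obtain b d where e: "D' (Poly_Mapping.single a 1) = Poly_Mapping.single b d" using D'_homog by blast
      show "\<exists>d. D' (Poly_Mapping.single a 1) = Poly_Mapping.single (a + (b0 - a0)) d"
      proof (cases "d = 0")
        case True then show ?thesis using e by (intro exI[of _ 0]) simp
      next
        case False
        have e': "D' (Poly_Mapping.single a 1) = Poly_Mapping.single (a + (b - a)) d" using e by simp
        have "b - a = b0 - a0" using shift_unique[OF e' False e0' d0] .
        then show ?thesis using e' by metis
      qed
    qed
  next
    case False
    then show ?thesis by (intro exI[of _ 0] allI exI[of _ 0]) simp
  qed
  then obtain m0 where m0: "\<forall>a. \<exists>d. D' (Poly_Mapping.single a 1) = Poly_Mapping.single (a + m0) d" by blast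
  then obtain \<delta> where \<delta>: "\<forall>a. D' (Poly_Mapping.single a 1) = Poly_Mapping.single (a + m0) (\<delta> a)" by metis
  have "\<forall>a c. D' (Poly_Mapping.single a c) = Poly_Mapping.single (a + m0) (c * \<delta> a)"
  proof (intro allI)
    fix a c
    have "D' (Poly_Mapping.single a c) = D' (Poly_Mapping.single 0 c * Poly_Mapping.single a 1)"
      by (simp add: mult_single)
    also have "\<dots> = Poly_Mapping.single (a + m0) (c * \<delta> a)"
      unfolding D'_const by (simp add: \<delta> mult_single)
    finally show "D' (Poly_Mapping.single a c) = Poly_Mapping.single (a + m0) (c * \<delta> a)" .
  qed
  then show ?thesis by blast
qed

lemma equivariance:
  assumes deg: "\<forall>a c. D' (Poly_Mapping.single a c) = Poly_Mapping.single (a + m0) (c * \<delta> a)"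
    and l: "\<forall>i. l i \<noteq> 0"
  shows "D' (torus_R l g) = Poly_Mapping.single 0 (charval l (- m0)) * torus_R l (D' g)"
proof -
  have mono: "D' (torus_R l (Poly_Mapping.single a c)) =
      Poly_Mapping.single 0 (charval l (- m0)) * torus_R l (D' (Poly_Mapping.single a c))" for a c
  proof -
    have "charval l (- m0) * charval l (a + m0) = charval l a"
      using charval_add[OF l, of "- m0" "a + m0"] by simp
    then show ?thesis by (simp add: torus_R_single deg mult_single mult_ac)
  qed
  have "D' (torus_R l g) = D' (torus_R l (\<Sum>a\<in>Poly_Mapping.keys g. Poly_Mapping.single a (Poly_Mapping.lookup g a)))"
    by (subst pm_sum_single[of g]) simp
  also have "\<dots> = (\<Sum>a\<in>Poly_Mapping.keys g. Poly_Mapping.single 0 (charval l (- m0)) *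
       torus_R l (D' (Poly_Mapping.single a (Poly_Mapping.lookup g a))))"
    by (simp add: torus_R_sum D'_sum mono)
  also have "\<dots> = Poly_Mapping.single 0 (charval l (- m0)) * torus_R l (D' g)"
    by (subst (3) pm_sum_single[of g]) (simp add: D'_sum torus_R_sum sum_distrib_left)
  finally show ?thesis .
qed

end


lemma single0_power: "Poly_Mapping.single 0 c ^ k = Poly_Mapping.single (0::'a::monoid_add) (c ^ k :: 'b::comm_semiring_1)"
  by (induction k) (simp_all add: mult_single)

locale rga_hd =
  fixes A :: "('n::{finite,linorder}, 'k::field_char_0) laurent \<Rightarrow> ('n, 'k) KTt"
  assumes A: "rational_Ga_action A" and hdA: "homogeneous_der (associated_derivation A)"
begin

sublocale hder "associated_derivation A"
  using rga_kder[OF A] hdA by unfold_locales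

lemma iA: "ihom A" by (rule rga_ihom[OF A])

lemma A_D': "A (D' g) = A_ext A (associated_derivation A g)"
proof -
  have "A_ext A (associated_derivation A g) = A_ext A (to_fr (D' g))" using D_eq[of g] by simp
  then show ?thesis unfolding A_ext_def by (simp add: fract_lift_to_fr[OF iA])
qed

lemma fps_deriv_A: "fps_deriv (Fps (A g)) = Fps (A (D' g))"
proof -
  obtain p q where q: "poly q 0 \<noteq> 0" and e: "A g = Fract p q" using rga_regular[OF A] by (rule regular0_E)
  have q2: "poly (q^2) 0 \<noteq> 0" using q by simp
  have u: "fps_of_poly q $ 0 \<noteq> 0" using q by (simp add: poly_0_coeff_0)
  note i1 = inverse_mult_eq_1'[OF u]
  let ?P = "fps_of_poly p" and ?Q = "fps_of_poly q" and ?P' = "fps_of_poly (pderiv p)" and ?Q' = "fps_of_poly (pderiv q)"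
  have "Fps (A (D' g)) = Fps (Fract (pderiv p * q - p * pderiv q) (q^2))"
    using rga_ODE[OF A q e] A_D' by simp
  also have "\<dots> = (?P' * ?Q - ?P * ?Q') * (inverse ?Q)^2"
    unfolding Fps_Fract[OF q2] by (simp add: fps_of_poly_diff fps_of_poly_mult fps_of_poly_power fps_inverse_mult power2_eq_square)
  also have "\<dots> = ?P' * inverse ?Q * (?Q * inverse ?Q) - ?P * ?Q' * (inverse ?Q)^2"
    by (simp add: algebra_simps power2_eq_square)
  also have "\<dots> = fps_deriv (Fps (A g))"
    unfolding e Fps_Fract[OF q] using i1
    by (simp add: fps_inverse_deriv[OF u] fps_of_poly_pderiv algebra_simps)
  finally show ?thesis by simp
qed

lemma of_nat_KT_nz: "n \<noteq> 0 \<Longrightarrow> (of_nat n :: ('n, 'k) KT) \<noteq> 0"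
proof -
  assume n: "n \<noteq> 0"
  have "(of_nat n :: ('n, 'k) laurent) \<noteq> 0" using n by simp
  then have "to_fr (of_nat n :: ('n, 'k) laurent) \<noteq> 0" by (rule ihom_nz[OF ihom_to_fr])
  then show ?thesis by (simp add: ihom_of_nat[OF ihom_to_fr])
qed

lemma Fps_A_nth: "Fps (A g) $ k = to_fr ((D' ^^ k) g) / of_nat (fact k)"
proof (induction k arbitrary: g)
  case 0 then show ?case by (simp add: rga_Fps0[OF A])
next
  case (Suc k)
  have "Fps (A g) $ Suc k = fps_deriv (Fps (A g)) $ k / of_nat (Suc k)"
    using of_nat_KT_nz[of "Suc k"] by (simp add: field_simps del: of_nat_Suc)
  also have "\<dots> = Fps (A (D' g)) $ k / of_nat (Suc k)" by (simp add: fps_deriv_A)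
  also have "\<dots> = to_fr ((D' ^^ k) (D' g)) / (of_nat (fact k) * of_nat (Suc k))" by (simp add: Suc)
  also have "\<dots> = to_fr ((D' ^^ Suc k) g) / of_nat (fact (Suc k))"
    by (simp only: funpow_Suc_right comp_def fact_Suc of_nat_id of_nat_mult mult.commute)
  finally show ?case .
qed

theorem T_homog: "T_homogeneous A"
proof -
  obtain m0 \<delta> where deg: "\<forall>a c. D' (Poly_Mapping.single a c) = Poly_Mapping.single (a + m0) (c * \<delta> a)"
    using degree_exists by blast
  show ?thesis unfolding T_homogeneous_def
  proof (rule exI[of _ "- m0"], intro allI impI)
    fix l :: "'n \<Rightarrow> 'k" and f assume l: "\<forall>i. l i \<noteq> 0"
    define c where "c = charval l (- m0)"
    have c: "c \<noteq> 0" unfolding c_def by (rule charval_nz[OF l])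
    let ?C = "to_fr (Poly_Mapping.single 0 c) :: ('n, 'k) KT"
    have C: "?C \<noteq> 0" using to_fr_single0_nz[OF c] .
    note hK = ihom_torus_K[OF l]
    have it: "(D' ^^ k) (torus_R l g) = Poly_Mapping.single 0 (c ^ k) * torus_R l ((D' ^^ k) g)" for k g
    proof (induction k)
      case 0 then show ?case by (simp flip: single_one)
    next
      case (Suc k)
      have "(D' ^^ Suc k) (torus_R l g) = D' (Poly_Mapping.single 0 (c ^ k) * torus_R l ((D' ^^ k) g))"
        using Suc by simp
      also have "\<dots> = Poly_Mapping.single 0 (c ^ k) * (Poly_Mapping.single 0 c * torus_R l (D' ((D' ^^ k) g)))"
        unfolding D'_const equivariance[OF deg l] c_def ..
      also have "\<dots> = Poly_Mapping.single 0 (c ^ Suc k) * torus_R l ((D' ^^ Suc k) g)"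
        by (simp add: mult_single mult.assoc[symmetric] mult.commute)
      finally show ?case .
    qed
    have r1: "regular0 (A (torus_R l f))" by (rule rga_regular[OF A])
    have r2: "regular0 (twist l c (A f))" and F2: "Fps (twist l c (A f)) = Psi (torus_K l) ?C (Fps (A f))"
      using Tw_regular_Fps[OF hK C rga_regular[OF A]] unfolding twist_Tw by auto
    have "Fps (A (torus_R l f)) = Fps (twist l c (A f))"
    proof (rule fps_ext)
      fix k
      have "Fps (A (torus_R l f)) $ k = to_fr (Poly_Mapping.single 0 (c ^ k) * torus_R l ((D' ^^ k) f)) / of_nat (fact k)"
        by (simp add: Fps_A_nth it)
      also have "\<dots> = ?C ^ k * to_fr (torus_R l ((D' ^^ k) f)) / of_nat (fact k)"
        by (simp add: ihom_mult[OF ihom_to_fr] ihom_power[OF ihom_to_fr] flip: single0_power)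
      also have "\<dots> = ?C ^ k * torus_K l (to_fr ((D' ^^ k) f) / of_nat (fact k))"
        by (simp add: ihom_divide[OF hK] torus_K_to_fr[OF l] ihom_of_nat[OF hK])
      also have "\<dots> = Fps (twist l c (A f)) $ k" by (simp add: F2 Fps_A_nth)
      finally show "Fps (A (torus_R l f)) $ k = Fps (twist l c (A f)) $ k" .
    qed
    then show "A (torus_R l f) = twist l (charval l (- m0)) (A f)"
      using Fps_inj[OF r1 r2] c_def by simp
  qed
qed

end


lemma scalar_LI:
  fixes c :: "int \<Rightarrow> 'k::field_char_0"
  assumes E: "finite E" and z: "\<forall>t::'k. t \<noteq> 0 \<longrightarrow> (\<Sum>e\<in>E. c e * t powi e) = 0"
    and e0: "e0 \<in> E"
  shows "c e0 = 0"
proof -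
  obtain N :: int where N: "N \<ge> 0" "\<forall>e\<in>E. e + N \<ge> 0"
  proof
    show "(\<Sum>e\<in>E. \<bar>e\<bar>) \<ge> 0" by (simp add: sum_nonneg)
    show "\<forall>e\<in>E. e + (\<Sum>e\<in>E. \<bar>e\<bar>) \<ge> 0"
    proof
      fix e assume "e \<in> E"
      then have "\<bar>e\<bar> \<le> (\<Sum>e\<in>E. \<bar>e\<bar>)" using E by (intro member_le_sum) auto
      then show "e + (\<Sum>e\<in>E. \<bar>e\<bar>) \<ge> 0" by linarith
    qed
  qed
  define p where "p = (\<Sum>e\<in>E. monom (c e) (nat (e + N)))"
  have pt: "poly p t = 0" if t: "t \<noteq> 0" for t :: 'k
  proof -
    have "poly p t = (\<Sum>e\<in>E. c e * t ^ nat (e + N))" by (simp add: p_def poly_sum poly_monom)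
    also have "\<dots> = (\<Sum>e\<in>E. c e * t powi e) * t ^ nat N"
      unfolding sum_distrib_right
    proof (rule sum.cong)
      fix e assume "e \<in> E"
      then have "t ^ nat (e + N) = t powi (e + N)" using N by (simp add: power_int_def)
      also have "\<dots> = t powi e * t powi N" using t by (simp add: power_int_add)
      also have "t powi N = t ^ nat N" using N by (simp add: power_int_def)
      finally show "c e * t ^ nat (e + N) = c e * t powi e * t ^ nat N" by simp
    qed simp
    also have "\<dots> = 0" using z t by simp
    finally show ?thesis .
  qed
  have "p = 0"
  proof (rule ccontr)
    assume "p \<noteq> 0"
    then have "finite {x. poly p x = 0}" by (rule poly_roots_finite)
    moreover have "{x::'k. x \<noteq> 0} \<subseteq> {x. poly p x = 0}" using pt by auto
    ultimately have "finite {x::'k. x \<noteq> 0}" by (rule finite_subset[rotated])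
    then have "finite (insert 0 {x::'k. x \<noteq> 0})" by simp
    moreover have "insert 0 {x::'k. x \<noteq> 0} = UNIV" by auto
    ultimately show False using infinite_UNIV_char_0 by metis
  qed
  moreover have "coeff p (nat (e0 + N)) = c e0"
  proof -
    have "coeff p (nat (e0 + N)) = (\<Sum>e\<in>E. if nat (e + N) = nat (e0 + N) then c e else 0)"
      by (simp add: p_def coeff_sum)
    also have "\<dots> = (\<Sum>e\<in>E. if e = e0 then c e else 0)"
      using N e0 by (intro sum.cong refl) (simp add: eq_nat_nat_iff)
    also have "\<dots> = c e0" using E e0 by simp
    finally show ?thesis .
  qed
  ultimately show ?thesis by simp
qed

lemma lookup_single0_mult:
  "Poly_Mapping.lookup (Poly_Mapping.single 0 s * (X :: ('n::{finite,linorder}, 'k::field_char_0) laurent)) a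
     = s * Poly_Mapping.lookup X a"
proof -
  have "Poly_Mapping.single 0 s * X = Poly_Mapping.map ((*) s) X" by (simp add: mult_map_scale_conv_mult)
  then show ?thesis by (simp add: map.rep_eq when_def)
qed

lemma laurent_LI:
  fixes v :: "int \<Rightarrow> ('n::{finite,linorder}, 'k::field_char_0) laurent"
  assumes E: "finite E"
    and z: "\<forall>t::'k. t \<noteq> 0 \<longrightarrow> (\<Sum>e\<in>E. Poly_Mapping.single 0 (t powi e) * v e) = 0"
    and e0: "e0 \<in> E"
  shows "v e0 = 0"
proof (rule poly_mapping_eqI)
  fix a
  have "\<forall>t::'k. t \<noteq> 0 \<longrightarrow> (\<Sum>e\<in>E. Poly_Mapping.lookup (v e) a * t powi e) = 0"
  proof (intro allI impI)
    fix t :: 'k assume "t \<noteq> 0"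
    then have "Poly_Mapping.lookup (\<Sum>e\<in>E. Poly_Mapping.single 0 (t powi e) * v e) a = 0" using z by simp
    then have "(\<Sum>e\<in>E. t powi e * Poly_Mapping.lookup (v e) a) = 0"
      by (simp add: lookup_sum lookup_single0_mult)
    then show "(\<Sum>e\<in>E. Poly_Mapping.lookup (v e) a * t powi e) = 0"
      by (simp add: mult.commute)
  qed
  from scalar_LI[OF E this e0] show "Poly_Mapping.lookup (v e0) a = Poly_Mapping.lookup 0 a" by simp
qed


definition res :: "'n \<Rightarrow> int \<Rightarrow> ('n, 'k) laurent \<Rightarrow> ('n, 'k::zero) laurent" where
  "res j e P = Poly_Mapping.mapp (\<lambda>a c. if Poly_Mapping.lookup a j = e then c else 0) P"

lemma lookup_res: "Poly_Mapping.lookup (res j e P) a = (if Poly_Mapping.lookup a j = e then Poly_Mapping.lookup P a else 0)"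
  by (simp add: res_def lookup_mapp when_def in_keys_iff)

lemma keys_res: "a \<in> Poly_Mapping.keys (res j e P) \<Longrightarrow> a \<in> Poly_Mapping.keys P \<and> Poly_Mapping.lookup a j = e"
  by (auto simp: in_keys_iff lookup_res split: if_splits)

definition lam :: "'n \<Rightarrow> 'k::field \<Rightarrow> 'n \<Rightarrow> 'k" where
  "lam j t = (\<lambda>i. if i = j then t else 1)"

lemma lam_nz: "t \<noteq> 0 \<Longrightarrow> \<forall>i. lam j t i \<noteq> 0"
  by (simp add: lam_def)

lemma charval_lam: "charval (lam j t) (a :: 'n::finite \<Rightarrow>\<^sub>0 int) = t powi (Poly_Mapping.lookup a j)"
proof -
  have "charval (lam j t) a = (\<Prod>i\<in>UNIV. if i = j then t powi (Poly_Mapping.lookup a i) else 1)"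
    unfolding charval_def lam_def by (intro prod.cong) auto
  also have "\<dots> = t powi (Poly_Mapping.lookup a j)" by (simp add: prod.delta')
  finally show ?thesis .
qed

lemma decomp:
  fixes Q :: "('n::{finite,linorder}, 'k::field_char_0) laurent"
  assumes E: "finite E" and sub: "\<forall>a\<in>Poly_Mapping.keys Q. Poly_Mapping.lookup a j + \<delta> \<in> E" and t: "t \<noteq> 0"
  shows "Poly_Mapping.single 0 (t powi \<delta>) * torus_R (lam j t) Q =
    (\<Sum>e\<in>E. Poly_Mapping.single 0 (t powi e) * res j (e - \<delta>) Q)"
proof (rule poly_mapping_eqI)
  fix a
  have "Poly_Mapping.lookup (\<Sum>e\<in>E. Poly_Mapping.single 0 (t powi e) * res j (e - \<delta>) Q) a =
     (\<Sum>e\<in>E. if e = Poly_Mapping.lookup a j + \<delta> then t powi e * Poly_Mapping.lookup Q a else 0)"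
    by (simp add: lookup_sum lookup_single0_mult lookup_res) (intro sum.cong, auto)
  also have "\<dots> = (if Poly_Mapping.lookup a j + \<delta> \<in> E then t powi (Poly_Mapping.lookup a j + \<delta>) * Poly_Mapping.lookup Q a else 0)"
    using E by (simp add: sum.delta')
  also have "\<dots> = t powi \<delta> * (t powi (Poly_Mapping.lookup a j) * Poly_Mapping.lookup Q a)"
    using sub t by (auto simp: in_keys_iff power_int_add mult_ac)
  also have "\<dots> = Poly_Mapping.lookup (Poly_Mapping.single 0 (t powi \<delta>) * torus_R (lam j t) Q) a"
    by (simp add: lookup_single0_mult lookup_torus_R charval_lam)
  finally show "Poly_Mapping.lookup (Poly_Mapping.single 0 (t powi \<delta>) * torus_R (lam j t) Q) a =
    Poly_Mapping.lookup (\<Sum>e\<in>E. Poly_Mapping.single 0 (t powi e) * res j (e - \<delta>) Q) a" by simp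
qed

lemma torus_K_Fract:
  assumes l: "\<forall>i. l i \<noteq> 0" and Q: "Q \<noteq> 0"
  shows "torus_K l (Fract P Q) = Fract (torus_R l P) (torus_R l Q)"
proof -
  have i: "ihom (\<lambda>f. to_fr (torus_R l f))"
    using ihom_comp[OF ihom_to_fr ihom_torus_R[OF l]] by (simp add: comp_def)
  have "torus_R l Q \<noteq> 0" using ihom_nz[OF ihom_torus_R[OF l] Q] .
  then show ?thesis unfolding torus_K_def using fract_lift_Fract[OF i Q] by (simp add: to_fr_Fract)
qed

definition fixedc :: "'n \<Rightarrow> ('n, 'k::zero) laurent \<Rightarrow> bool" where
  "fixedc j P \<longleftrightarrow> (\<exists>e. \<forall>a\<in>Poly_Mapping.keys P. Poly_Mapping.lookup a j = e)"

lemma eigen_step: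
  fixes g :: "('n::{finite,linorder}, 'k::field_char_0) KT"
  assumes eig: "\<forall>l. (\<forall>i. l i \<noteq> 0) \<longrightarrow> torus_K l g = to_fr (Poly_Mapping.single 0 (charval l d)) * g"
    and Q: "Q \<noteq> 0" and g: "g = Fract P Q"
  shows "\<exists>P' Q'. Q' \<noteq> 0 \<and> g = Fract P' Q' \<and> Poly_Mapping.keys P' \<subseteq> Poly_Mapping.keys P \<and>
     Poly_Mapping.keys Q' \<subseteq> Poly_Mapping.keys Q \<and> fixedc j P' \<and> fixedc j Q'"
proof -
  define \<delta> where "\<delta> = Poly_Mapping.lookup d j"
  define E where "E = (\<lambda>a. Poly_Mapping.lookup a j) ` Poly_Mapping.keys P \<union> (\<lambda>a. Poly_Mapping.lookup a j + \<delta>) ` Poly_Mapping.keys Q"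
  have E: "finite E" unfolding E_def by simp
  define v where "v e = res j e P * Q - P * res j (e - \<delta>) Q" for e
  have z: "(\<Sum>e\<in>E. Poly_Mapping.single 0 (t powi e) * v e) = 0" if t: "t \<noteq> 0" for t :: 'k
  proof -
    let ?l = "lam j t"
    have l: "\<forall>i. ?l i \<noteq> 0" by (rule lam_nz[OF t])
    have "torus_K ?l g = to_fr (Poly_Mapping.single 0 (charval ?l d)) * g" using eig l by blast
    then have "Fract (torus_R ?l P) (torus_R ?l Q) = Fract (Poly_Mapping.single 0 (t powi \<delta>) * P) Q"
      unfolding g torus_K_Fract[OF l Q] by (simp add: to_fr_def charval_lam \<delta>_def)
    moreover have "torus_R ?l Q \<noteq> 0" using ihom_nz[OF ihom_torus_R[OF l] Q] .
    ultimately have eq: "torus_R ?l P * Q = Poly_Mapping.single 0 (t powi \<delta>) * P * torus_R ?l Q"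
      using Q by (simp add: eq_fract)
    have dP: "Poly_Mapping.single 0 (t powi 0) * torus_R ?l P = (\<Sum>e\<in>E. Poly_Mapping.single 0 (t powi e) * res j (e - 0) P)"
      by (rule decomp[OF E _ t]) (auto simp: E_def)
    have dQ: "Poly_Mapping.single 0 (t powi \<delta>) * torus_R ?l Q = (\<Sum>e\<in>E. Poly_Mapping.single 0 (t powi e) * res j (e - \<delta>) Q)"
      by (rule decomp[OF E _ t]) (auto simp: E_def)
    have "(\<Sum>e\<in>E. Poly_Mapping.single 0 (t powi e) * v e) =
       (\<Sum>e\<in>E. Poly_Mapping.single 0 (t powi e) * res j e P) * Q - P * (\<Sum>e\<in>E. Poly_Mapping.single 0 (t powi e) * res j (e - \<delta>) Q)"
      by (simp add: v_def sum_distrib_left sum_distrib_right sum_subtractf algebra_simps)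
    also have "\<dots> = torus_R ?l P * Q - P * (Poly_Mapping.single 0 (t powi \<delta>) * torus_R ?l Q)"
      using dP dQ by simp
    also have "\<dots> = 0" using eq by (simp add: algebra_simps)
    finally show ?thesis .
  qed
  have "Poly_Mapping.keys Q \<noteq> {}" using Q by simp
  then obtain b where b: "b \<in> Poly_Mapping.keys Q" by blast
  define e0 where "e0 = Poly_Mapping.lookup b j + \<delta>"
  have e0: "e0 \<in> E" unfolding E_def e0_def using b by blast
  have "\<forall>t::'k. t \<noteq> 0 \<longrightarrow> (\<Sum>e\<in>E. Poly_Mapping.single 0 (t powi e) * v e) = 0" using z by blast
  then have v0: "v e0 = 0" using laurent_LI[OF E _ e0] by blast
  define P' where "P' = res j e0 P"
  define Q' where "Q' = res j (e0 - \<delta>) Q"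
  have "Poly_Mapping.lookup Q' b \<noteq> 0" using b by (simp add: Q'_def lookup_res e0_def in_keys_iff)
  then have Q': "Q' \<noteq> 0" by auto
  have PQ: "P' * Q = P * Q'" using v0 by (simp add: v_def P'_def Q'_def)
  have "g = Fract P' Q'" unfolding g using Q Q' PQ by (simp add: eq_fract)
  moreover have "Poly_Mapping.keys P' \<subseteq> Poly_Mapping.keys P"
    unfolding P'_def using keys_res by (metis subsetI)
  moreover have "Poly_Mapping.keys Q' \<subseteq> Poly_Mapping.keys Q"
    unfolding Q'_def using keys_res by (metis subsetI)
  moreover have "fixedc j P'"
    unfolding fixedc_def P'_def by (intro exI[of _ e0] ballI) (metis keys_res)
  moreover have "fixedc j Q'"
    unfolding fixedc_def Q'_def by (intro exI[of _ "e0 - \<delta>"] ballI) (metis keys_res)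
  ultimately show ?thesis using Q' by blast
qed

lemma eigen_all:
  fixes g :: "('n::{finite,linorder}, 'k::field_char_0) KT"
  assumes eig: "\<forall>l. (\<forall>i. l i \<noteq> 0) \<longrightarrow> torus_K l g = to_fr (Poly_Mapping.single 0 (charval l d)) * g"
    and I: "finite I"
  shows "\<exists>P Q. Q \<noteq> 0 \<and> g = Fract P Q \<and> (\<forall>j\<in>I. fixedc j P \<and> fixedc j Q)"
  using I
proof (induction I rule: finite_induct)
  case empty
  obtain P Q where "g = Fract P Q" "Q \<noteq> 0" by (cases g) auto
  then show ?case by blast
next
  case (insert j I)
  then obtain P Q where Q: "Q \<noteq> 0" and g: "g = Fract P Q" and fx: "\<forall>j\<in>I. fixedc j P \<and> fixedc j Q" by blast
  obtain P' Q' where Q': "Q' \<noteq> 0" and g': "g = Fract P' Q'" and sub: "Poly_Mapping.keys P' \<subseteq> Poly_Mapping.keys P"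
      "Poly_Mapping.keys Q' \<subseteq> Poly_Mapping.keys Q" and fj: "fixedc j P'" "fixedc j Q'"
    using eigen_step[OF eig Q g] by blast
  have "\<forall>i\<in>I. fixedc i P' \<and> fixedc i Q'" using fx sub unfolding fixedc_def by blast
  then show ?case using Q' g' fj by blast
qed

lemma all_fixed_single:
  fixes P :: "('n::{finite,linorder}, 'k::field_char_0) laurent"
  assumes "\<forall>j. fixedc j P"
  shows "\<exists>a c. P = Poly_Mapping.single a c"
proof (cases "P = 0")
  case True then show ?thesis by (intro exI[of _ 0]) simp
next
  case False
  then have "Poly_Mapping.keys P \<noteq> {}" by simp
  then obtain a0 where a0: "a0 \<in> Poly_Mapping.keys P" by blast
  have k: "\<forall>a\<in>Poly_Mapping.keys P. a = a0"
  proof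
    fix a assume a: "a \<in> Poly_Mapping.keys P"
    show "a = a0"
    proof (rule poly_mapping_eqI)
      fix j
      from assms obtain e where "\<forall>b\<in>Poly_Mapping.keys P. Poly_Mapping.lookup b j = e" unfolding fixedc_def by blast
      then show "Poly_Mapping.lookup a j = Poly_Mapping.lookup a0 j" using a a0 by simp
    qed
  qed
  have "P = Poly_Mapping.single a0 (Poly_Mapping.lookup P a0)"
  proof (rule poly_mapping_eqI)
    fix a show "Poly_Mapping.lookup P a = Poly_Mapping.lookup (Poly_Mapping.single a0 (Poly_Mapping.lookup P a0)) a"
      using k by (cases "a = a0") (auto simp: lookup_single when_def in_keys_iff)
  qed
  then show ?thesis by blast
qed

theorem eigen_homog:
  fixes g :: "('n::{finite,linorder}, 'k::field_char_0) KT"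
  assumes eig: "\<forall>l. (\<forall>i. l i \<noteq> 0) \<longrightarrow> torus_K l g = to_fr (Poly_Mapping.single 0 (charval l d)) * g"
  shows "homog_K g"
proof -
  obtain P Q where Q: "Q \<noteq> 0" and g: "g = Fract P Q" and fx: "\<forall>j\<in>UNIV. fixedc j P \<and> fixedc j Q"
    using eigen_all[OF eig, of UNIV] by auto
  obtain a c where "P = Poly_Mapping.single a c" using all_fixed_single fx by blast
  moreover obtain a' c' where "Q = Poly_Mapping.single a' c'" using all_fixed_single fx by blast
  ultimately show ?thesis unfolding homog_K_def homog_R_def using Q g by blast
qed


lemma T_homog_imp_hd:
  fixes A :: "('n::{finite,linorder}, 'k::field_char_0) laurent \<Rightarrow> ('n, 'k) KTt"
  assumes A: "rational_Ga_action A" and T: "T_homogeneous A"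
  shows "homogeneous_der (associated_derivation A)"
proof -
  let ?D = "associated_derivation A"
  have kd: "k_derivation ?D" by (rule rga_kder[OF A])
  have Dc: "?D (Poly_Mapping.single 0 c * f) = to_fr (Poly_Mapping.single 0 c) * ?D f" for c f
    using kd unfolding k_derivation_def by blast
  obtain m0 where m0: "\<forall>l. (\<forall>i. l i \<noteq> 0) \<longrightarrow> (\<forall>f. A (torus_R l f) = twist l (charval l m0) (A f))"
    using T unfolding T_homogeneous_def by blast
  have equi: "?D (torus_R l f) = to_fr (Poly_Mapping.single 0 (charval l m0)) * torus_K l (?D f)"
    if l: "\<forall>i. l i \<noteq> 0" for l f
  proof -
    have c: "charval l m0 \<noteq> 0" by (rule charval_nz[OF l])
    let ?C = "to_fr (Poly_Mapping.single 0 (charval l m0)) :: ('n, 'k) KT"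
    have C: "?C \<noteq> 0" using to_fr_single0_nz[OF c] .
    have F2: "Fps (twist l (charval l m0) (A f)) = Psi (torus_K l) ?C (Fps (A f))"
      using Tw_regular_Fps[OF ihom_torus_K[OF l] C rga_regular[OF A]] unfolding twist_Tw by auto
    have "?D (torus_R l f) = Fps (A (torus_R l f)) $ 1" by (rule rga_der_Fps[OF A])
    also have "\<dots> = Fps (twist l (charval l m0) (A f)) $ 1" using m0 l by simp
    also have "\<dots> = ?C * torus_K l (Fps (A f) $ 1)" by (simp add: F2)
    also have "\<dots> = ?C * torus_K l (?D f)" by (simp add: rga_der_Fps[OF A])
    finally show ?thesis .
  qed
  have g_homog: "homog_K (?D (Poly_Mapping.single a 1))" for a
  proof -
    let ?g = "?D (Poly_Mapping.single a 1)"
    have "\<forall>l. (\<forall>i. l i \<noteq> 0) \<longrightarrow> torus_K l ?g = to_fr (Poly_Mapping.single 0 (charval l (a - m0))) * ?g"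
    proof (intro allI impI)
      fix l :: "'n \<Rightarrow> 'k" assume l: "\<forall>i. l i \<noteq> 0"
      let ?C = "to_fr (Poly_Mapping.single 0 (charval l m0)) :: ('n, 'k) KT"
      have C: "?C \<noteq> 0" using to_fr_single0_nz[OF charval_nz[OF l]] .
      have "torus_R l (Poly_Mapping.single a 1) = Poly_Mapping.single 0 (charval l a) * Poly_Mapping.single a 1"
        by (simp add: torus_R_single mult_single)
      then have "to_fr (Poly_Mapping.single 0 (charval l a)) * ?g = ?C * torus_K l ?g"
        using equi[OF l, of "Poly_Mapping.single a 1"] Dc by simp
      moreover have "to_fr (Poly_Mapping.single 0 (charval l a)) =
          to_fr (Poly_Mapping.single 0 (charval l (a - m0))) * ?C"
        using charval_nz[OF l, of m0]
        by (simp add: ihom_mult[OF ihom_to_fr, symmetric] mult_single charval_diff[OF l])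
      ultimately have "?C * (to_fr (Poly_Mapping.single 0 (charval l (a - m0))) * ?g) = ?C * torus_K l ?g"
        by (simp add: mult_ac)
      then show "torus_K l ?g = to_fr (Poly_Mapping.single 0 (charval l (a - m0))) * ?g"
        using C by simp
    qed
    then show ?thesis by (rule eigen_homog)
  qed
  show ?thesis unfolding homogeneous_der_def
  proof (intro allI impI)
    fix f :: "('n, 'k) laurent" assume "homog_R f"
    then obtain a c where f: "f = Poly_Mapping.single a c" unfolding homog_R_def by blast
    have "f = Poly_Mapping.single 0 c * Poly_Mapping.single a 1" using f by (simp add: mult_single)
    then have e: "?D f = to_fr (Poly_Mapping.single 0 c) * ?D (Poly_Mapping.single a 1)" using Dc by simp
    obtain x y where xy: "homog_R x" "homog_R y" "y \<noteq> 0" "?D (Poly_Mapping.single a 1) = Fract x y"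
      using g_homog[of a] unfolding homog_K_def by blast
    obtain mx cx where x: "x = Poly_Mapping.single mx cx" using xy(1) unfolding homog_R_def by blast
    have "to_fr (Poly_Mapping.single 0 c) * Fract x y = Fract (Poly_Mapping.single mx (c * cx)) y"
      unfolding x by (simp add: to_fr_def mult_single)
    then have D: "?D f = Fract (Poly_Mapping.single mx (c * cx)) y" using e xy(4) by simp
    have h: "homog_R (Poly_Mapping.single mx (c * cx) :: ('n, 'k) laurent)" unfolding homog_R_def by blast
    show "homog_K (?D f)" unfolding homog_K_def
      by (rule exI[of _ "Poly_Mapping.single mx (c * cx)"], rule exI[of _ y]) (simp add: h xy(2,3) D)
  qed
qed

theorem lemma3p3:
  fixes A :: "('n::{finite,linorder}, 'k::field_char_0) laurent \<Rightarrow> ('n, 'k) KTt"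
    and D :: "('n, 'k) laurent \<Rightarrow> ('n, 'k) KT"
  shows "(rational_Ga_action A \<longrightarrow>
            (T_homogeneous A \<longleftrightarrow> homogeneous_der (associated_derivation A)))
       \<and> (k_derivation D \<and> homogeneous_der D \<longrightarrow> (\<forall>f. \<exists>g. D f = to_fr g))"
proof (intro conjI impI allI)
  assume A: "rational_Ga_action A"
  show "T_homogeneous A \<longleftrightarrow> homogeneous_der (associated_derivation A)"
  proof
    assume "T_homogeneous A" then show "homogeneous_der (associated_derivation A)"
      by (rule T_homog_imp_hd[OF A])
  next
    assume hd: "homogeneous_der (associated_derivation A)"
    interpret rga_hd A using A hd by unfold_locales
    show "T_homogeneous A" by (rule T_homog)
  qed
next
  fix f assume "k_derivation D \<and> homogeneous_der D"
  then show "\<exists>g. D f = to_fr g" using part2 by blast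
qed


end
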